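(* Let $n$ be an odd positive integer and let the parameter space be $\Theta=\{(\theta,\gamma_1,\dots,\gamma_n):\theta\in\{0,1\},\ \gamma_i\in[0,1]\ \forall i\}$. Conditionally on $(\theta,\boldsymbol\gamma)\in\Theta$, let $Y_1,\dots,Y_n\in\{0,1\}$ be independent with $\mathbb{P}(Y_i=1\mid\theta=1,\boldsymbol\gamma)=\mathbb{P}(Y_i=0\mid\theta=0,\boldsymbol\gamma)=\gamma_i$, and let $U\sim\mathrm{Bernoulli}(1/2)$ be independent of $\vec Y$. Decision rules are functions $\delta:\{0,1\}^n\times\{0,1\}\to\{0,1\}$ with loss $L(\theta,a)=\mathbb{I}(\theta\ne a)$ and risk $R(\delta,\xi)=\mathbb{E}[L(\theta,\delta(\vec Y,U))\mid\xi]$ for $\xi=(\theta,\boldsymbol\gamma)\in\Theta$. Then the coin flip rule $\delta^{cf}(\vec y,u)=u$ is minimax: $\sup_{\xi\in\Theta}R(\delta^{cf},\xi)=\inf_\delta\sup_{\xi\in\Theta}R(\delta,\xi)$. *)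

theory Defs
  imports Complex_Main "HOL-Library.FuncSet"
begin

text \<open>Binary values {0,1} are encoded as bool (True = 1, False = 0).
  A decision rule is any function delta :: bool list => bool => bool
  (its values on lists of length other than n are irrelevant).\<close>

definition Theta :: "nat \<Rightarrow> (bool \<times> (nat \<Rightarrow> real)) set" where
  "Theta n = UNIV \<times> ({..<n} \<rightarrow>\<^sub>E {0..1})"

definition probY :: "nat \<Rightarrow> bool \<Rightarrow> (nat \<Rightarrow> real) \<Rightarrow> bool list \<Rightarrow> real" where
  "probY n \<theta> \<gamma> ys = (\<Prod>i<n. if ys ! i = \<theta> then \<gamma> i else 1 - \<gamma> i)"

text \<open>Risk under 0-1 loss, with U ~ Bernoulli(1/2) independent of Y.\<close>
definition risk :: "nat \<Rightarrow> (bool list \<Rightarrow> bool \<Rightarrow> bool) \<Rightarrow> bool \<times> (nat \<Rightarrow> real) \<Rightarrow> real" where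
  "risk n \<delta> \<xi> = (case \<xi> of (\<theta>, \<gamma>) \<Rightarrow>
     (\<Sum>ys\<in>{ys. length ys = n}. \<Sum>u\<in>(UNIV::bool set).
        (1/2) * probY n \<theta> \<gamma> ys * (if \<theta> \<noteq> \<delta> ys u then 1 else 0)))"

end

theory Submission
  imports Defs
begin

lemma lists_Suc_eq:
  "{ys :: bool list. length ys = Suc n} = (\<lambda>(b, ys). b # ys) ` (UNIV \<times> {ys. length ys = n})"
  by (auto simp: length_Suc_conv image_iff)

lemma sum_prod_lists:
  fixes f :: "nat \<Rightarrow> bool \<Rightarrow> real"
  shows "(\<Sum>ys\<in>{ys. length ys = n}. \<Prod>i<n. f i (ys ! i)) = (\<Prod>i<n. f i True + f i False)"
proof (induction n arbitrary: f)
  case 0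
  then show ?case by simp
next
  case (Suc n)
  have inj: "inj_on (\<lambda>(b, ys). b # (ys::bool list)) (UNIV \<times> {ys. length ys = n})"
    by (auto simp: inj_on_def)
  have "(\<Sum>ys\<in>{ys. length ys = Suc n}. \<Prod>i<Suc n. f i (ys ! i))
      = (\<Sum>p\<in>UNIV \<times> {ys. length ys = n}. \<Prod>i<Suc n. f i ((fst p # snd p) ! i))"
    unfolding lists_Suc_eq by (subst sum.reindex[OF inj]) (auto intro!: sum.cong)
  also have "\<dots> = (\<Sum>b\<in>UNIV. \<Sum>ys\<in>{ys. length ys = n}. f 0 b * (\<Prod>i<n. f (Suc i) (ys ! i)))"
    by (simp del: prod.lessThan_Suc add: sum.cartesian_product prod.lessThan_Suc_shift split_def)
  also have "\<dots> = (\<Sum>b\<in>UNIV. f 0 b * (\<Prod>i<n. f (Suc i) True + f (Suc i) False))"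
    by (simp add: sum_distrib_left[symmetric] Suc.IH[of "\<lambda>i. f (Suc i)"])
  also have "\<dots> = (\<Prod>i<Suc n. f i True + f i False)"
    by (simp del: prod.lessThan_Suc add: prod.lessThan_Suc_shift UNIV_bool algebra_simps)
  finally show ?case .
qed

lemma sum_probY: "(\<Sum>ys\<in>{ys. length ys = n}. probY n \<theta> \<gamma> ys) = 1"
  unfolding probY_def by (subst sum_prod_lists) (cases \<theta>; simp)

lemma probY_nonneg: "\<gamma> \<in> {..<n} \<rightarrow>\<^sub>E {0..1} \<Longrightarrow> probY n \<theta> \<gamma> ys \<ge> 0"
  unfolding probY_def by (intro prod_nonneg) (auto simp: PiE_def Pi_def)

lemma risk_cf: "risk n (\<lambda>ys u. u) (\<theta>, \<gamma>) = 1/2"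
proof -
  have "risk n (\<lambda>ys u. u) (\<theta>, \<gamma>) = (\<Sum>ys\<in>{ys. length ys = n}. (1/2) * probY n \<theta> \<gamma> ys)"
    unfolding risk_def by (cases \<theta>) (auto simp: UNIV_bool intro!: sum.cong)
  also have "\<dots> = 1/2" by (simp add: sum_divide_distrib[symmetric] sum_probY)
  finally show ?thesis .
qed

lemma risk_le: assumes "\<xi> \<in> Theta n" shows "risk n \<delta> \<xi> \<le> 1"
proof -
  obtain \<theta> \<gamma> where xi: "\<xi> = (\<theta>, \<gamma>)" and g: "\<gamma> \<in> {..<n} \<rightarrow>\<^sub>E {0..1}"
    using assms by (auto simp: Theta_def)
  have "risk n \<delta> \<xi> \<le> (\<Sum>ys\<in>{ys. length ys = n}. \<Sum>u\<in>(UNIV::bool set). (1/2) * probY n \<theta> \<gamma> ys)"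
    unfolding risk_def xi prod.case
    by (intro sum_mono mult_left_le) (auto simp: probY_nonneg[OF g])
  also have "\<dots> = 1" by (simp add: UNIV_bool sum_probY)
  finally show ?thesis .
qed

lemma risk_pair:
  fixes n :: nat
  defines "g \<equiv> (\<lambda>i. if i < n then 1/2 else undefined) :: nat \<Rightarrow> real"
  shows "risk n \<delta> (True, g) + risk n \<delta> (False, g) = 1"
proof -
  have p: "probY n \<theta> g ys = (1/2)^n" for \<theta> ys
    unfolding probY_def g_def by (subst prod.cong[OF refl, where h="\<lambda>_. 1/2"]) auto
  have "risk n \<delta> (True, g) + risk n \<delta> (False, g)
     = (\<Sum>ys\<in>{ys. length ys = n}. \<Sum>u\<in>(UNIV::bool set).
          (1/2) * probY n True g ys * (if True \<noteq> \<delta> ys u then 1 else 0) +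
          (1/2) * probY n False g ys * (if False \<noteq> \<delta> ys u then 1 else 0))"
    unfolding risk_def by (simp only: prod.case sum.distrib)
  also have "\<dots> = (\<Sum>ys\<in>{ys::bool list. length ys = n}. \<Sum>u\<in>(UNIV::bool set). (1/2) * (1/2)^n)"
  proof -
    have pt: "(1/2) * probY n True g ys * (if True \<noteq> \<delta> ys u then 1 else 0) +
          (1/2) * probY n False g ys * (if False \<noteq> \<delta> ys u then 1 else 0) = (1/2) * (1/2::real)^n"
      for ys u by (simp add: p)
    show ?thesis by (simp only: pt)
  qed
  also have "\<dots> = (\<Sum>ys\<in>{ys. length ys = n}. probY n True g ys)"
    by (simp add: UNIV_bool p)
  also have "\<dots> = 1" by (rule sum_probY)
  finally show ?thesis .
qed

theorem theorem7:
  fixes n :: nat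
  assumes "odd n"
  shows "(SUP \<xi>\<in>Theta n. risk n (\<lambda>ys u. u) \<xi>) = (INF \<delta>. SUP \<xi>\<in>Theta n. risk n \<delta> \<xi>)"
proof -
  define g where "g \<equiv> (\<lambda>i. if i < n then 1/2 else undefined) :: nat \<Rightarrow> real"
  have gT: "(b, g) \<in> Theta n" for b unfolding Theta_def g_def by (auto simp: PiE_def extensional_def)
  have ne: "Theta n \<noteq> {}" using gT by blast
  have bdd: "bdd_above ((risk n \<delta>) ` Theta n)" for \<delta>
    using risk_le by (auto intro!: bdd_aboveI2)
  have L: "(SUP \<xi>\<in>Theta n. risk n (\<lambda>ys u. u) \<xi>) = 1/2"
  proof -
    have "(SUP \<xi>\<in>Theta n. risk n (\<lambda>ys u. u) \<xi>) = (SUP \<xi>\<in>Theta n. 1/2::real)"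
      by (rule SUP_cong) (auto simp: risk_cf)
    also have "\<dots> = 1/2" using ne by simp
    finally show ?thesis .
  qed
  have ge: "1/2 \<le> (SUP \<xi>\<in>Theta n. risk n \<delta> \<xi>)" for \<delta>
  proof -
    have "risk n \<delta> (True, g) \<le> (SUP \<xi>\<in>Theta n. risk n \<delta> \<xi>)"
      by (rule cSUP_upper[OF gT bdd])
    moreover have "risk n \<delta> (False, g) \<le> (SUP \<xi>\<in>Theta n. risk n \<delta> \<xi>)"
      by (rule cSUP_upper[OF gT bdd])
    moreover have "risk n \<delta> (True, g) + risk n \<delta> (False, g) = 1"
      unfolding g_def by (rule risk_pair)
    ultimately show ?thesis by linarith
  qed
  have "(INF \<delta>. SUP \<xi>\<in>Theta n. risk n \<delta> \<xi>) = 1/2"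
  proof (rule antisym)
    show "(INF \<delta>. SUP \<xi>\<in>Theta n. risk n \<delta> \<xi>) \<le> 1/2"
      unfolding L[symmetric]
      by (rule cINF_lower) (auto intro: bdd_belowI[where m="1/2"] ge)
    show "1/2 \<le> (INF \<delta>. SUP \<xi>\<in>Theta n. risk n \<delta> \<xi>)"
      by (rule cINF_greatest) (simp, rule ge)
  qed
  with L show ?thesis by simp
qed

end
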